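(* Let $G$ be a graph and $v$ a vertex of $G$. Then $v$ is always-activated if and only if $nd(v)=0$, and $v$ is never-activated if and only if $nd(v)=1$.
   Context: For a finite simple graph $G$ with vertex set $\{v_1,\dots,v_n\}$, the closed adjacency matrix $N(G)$ is the $n\times n$ matrix over $\mathbb{Z}_2$ whose $(i,j)$ entry is $1$ iff $i=j$ or $v_i$ is adjacent to $v_j$. The nullity is $\nu(G):=\dim\operatorname{Ker}(N(G))$, with the convention $\nu(K_0)=0$ for the graph with no vertices; elements of the kernel are null patterns. The null difference of $v$ is $nd(v):=\nu(G-v)-\nu(G)$, where $G-v$ is $G$ with $v$ and its incident edges deleted. A vertex $v$ is half-activated if $\boldsymbol{\ell}(v)=1$ for some null pattern $\boldsymbol{\ell}$; otherwise it is always-activated if $\mathbf{p}(v)=1$ for every $\mathbf{p}\in\mathbb{Z}_2^{V(G)}$ with $N(G)\mathbf{p}=\mathbf{1}$ (the all-ones vector), and never-activated if $\mathbf{p}(v)=0$ for every such $\mathbf{p}$. *)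

theory Defs
  imports Complex_Main "HOL-Library.Z2" "HOL-Library.Function_Algebras"
begin

definition simple_graph :: "'a set \<Rightarrow> ('a \<Rightarrow> 'a \<Rightarrow> bool) \<Rightarrow> bool" where
  "simple_graph V E \<longleftrightarrow> finite V \<and> (\<forall>x\<in>V. \<forall>y\<in>V. E x y \<longleftrightarrow> E y x) \<and> (\<forall>x\<in>V. \<not> E x x)"

definition closed_adj :: "('a \<Rightarrow> 'a \<Rightarrow> bool) \<Rightarrow> 'a \<Rightarrow> 'a \<Rightarrow> bit" where
  "closed_adj E i j = (if i = j \<or> E i j then 1 else 0)"

(* vectors in Z_2^V, represented as functions vanishing outside V *)
definition vecs :: "'a set \<Rightarrow> ('a \<Rightarrow> bit) set" where
  "vecs V = {p. \<forall>x. x \<notin> V \<longrightarrow> p x = 0}"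

definition Nmul :: "'a set \<Rightarrow> ('a \<Rightarrow> 'a \<Rightarrow> bool) \<Rightarrow> ('a \<Rightarrow> bit) \<Rightarrow> 'a \<Rightarrow> bit" where
  "Nmul V E p = (\<lambda>i. if i \<in> V then (\<Sum>j\<in>V. closed_adj E i j * p j) else 0)"

definition ones :: "'a set \<Rightarrow> 'a \<Rightarrow> bit" where
  "ones V = (\<lambda>x. if x \<in> V then 1 else 0)"

definition null_patterns :: "'a set \<Rightarrow> ('a \<Rightarrow> 'a \<Rightarrow> bool) \<Rightarrow> ('a \<Rightarrow> bit) set" where
  "null_patterns V E = {p \<in> vecs V. Nmul V E p = (\<lambda>_. 0)}"

definition nullity :: "'a set \<Rightarrow> ('a \<Rightarrow> 'a \<Rightarrow> bool) \<Rightarrow> nat" where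
  "nullity V E = vector_space.dim (\<lambda>(c::bit) (p::'a \<Rightarrow> bit) x. c * p x) (null_patterns V E)"

definition null_diff :: "'a set \<Rightarrow> ('a \<Rightarrow> 'a \<Rightarrow> bool) \<Rightarrow> 'a \<Rightarrow> int" where
  "null_diff V E v = int (nullity (V - {v}) E) - int (nullity V E)"

definition half_activated :: "'a set \<Rightarrow> ('a \<Rightarrow> 'a \<Rightarrow> bool) \<Rightarrow> 'a \<Rightarrow> bool" where
  "half_activated V E v \<longleftrightarrow> (\<exists>l\<in>null_patterns V E. l v = 1)"

definition always_activated :: "'a set \<Rightarrow> ('a \<Rightarrow> 'a \<Rightarrow> bool) \<Rightarrow> 'a \<Rightarrow> bool" where
  "always_activated V E v \<longleftrightarrow> \<not> half_activated V E v \<and>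
     (\<forall>p\<in>vecs V. Nmul V E p = ones V \<longrightarrow> p v = 1)"

definition never_activated :: "'a set \<Rightarrow> ('a \<Rightarrow> 'a \<Rightarrow> bool) \<Rightarrow> 'a \<Rightarrow> bool" where
  "never_activated V E v \<longleftrightarrow> \<not> half_activated V E v \<and>
     (\<forall>p\<in>vecs V. Nmul V E p = ones V \<longrightarrow> p v = 0)"

end

theory Submission
  imports Defs
begin
declare add_bit_eq_xor[simp del] mult_bit_eq_and[simp del]

lemma bit_add_self[simp]: "(x::bit) + x = 0"
  by (cases x) auto
lemma bit_mult_self[simp]: "(x::bit) * x = x"
  by (cases x) auto
lemma bit_cases2: "(x::bit) = 0 \<or> x = 1"
  by (cases x) auto
lemma bit_minus[simp]: "(x::bit) - y = x + y"
  by (cases x; cases y) auto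
lemma bit_eq_add: "((x::bit) = y + z) = (x + y = z)"
  by (cases x; cases y; cases z) auto

lemma bit4: "((a::bit) + b) + (b + c) = a + c"
  by (cases a; cases b; cases c) auto

lemma bit_plus_one_zero[simp]: "((a::bit) + 1 = 0) = (a = 1)"
  by (cases a) auto

lemma vs: "vector_space (\<lambda>(c::bit) (p::'a\<Rightarrow>bit) x. c * p x)"
  by unfold_locales (auto simp: fun_eq_iff algebra_simps)

lemma quad:
  fixes f :: "'b \<Rightarrow> 'b \<Rightarrow> bit"
  assumes "finite S" "\<forall>i\<in>S. \<forall>j\<in>S. f i j = f j i"
  shows "(\<Sum>i\<in>S. \<Sum>j\<in>S. f i j) = (\<Sum>i\<in>S. f i i)"
  using assms
proof (induction S rule: finite_induct)
  case empty then show ?case by simp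
next
  case (insert k S)
  have sym: "(\<Sum>i\<in>S. f i k) = (\<Sum>j\<in>S. f k j)"
    proof (rule sum.cong[OF refl])
    fix i assume "i \<in> S" then show "f i k = f k i" using insert.prems by blast
  qed
  have e1: "(\<Sum>i\<in>insert k S. \<Sum>j\<in>insert k S. f i j)
     = (\<Sum>i\<in>insert k S. f i k + (\<Sum>j\<in>S. f i j))"
    using insert.hyps by (intro sum.cong) (simp_all add: sum.insert)
  have e2: "(\<Sum>i\<in>insert k S. f i k + (\<Sum>j\<in>S. f i j))
     = (f k k + (\<Sum>j\<in>S. f k j)) + ((\<Sum>i\<in>S. f i k) + (\<Sum>i\<in>S. \<Sum>j\<in>S. f i j))"
    using insert.hyps by (simp add: sum.distrib ac_simps)
  have e3: "(f k k + (\<Sum>j\<in>S. f k j)) + ((\<Sum>i\<in>S. f i k) + (\<Sum>i\<in>S. \<Sum>j\<in>S. f i j))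
     = f k k + (\<Sum>i\<in>S. \<Sum>j\<in>S. f i j)"
    unfolding sym by (rule bit4)
  have e4: "(\<Sum>i\<in>S. \<Sum>j\<in>S. f i j) = (\<Sum>i\<in>S. f i i)"
    using insert.IH insert.prems by blast
  have "(\<Sum>i\<in>insert k S. \<Sum>j\<in>insert k S. f i j) = f k k + (\<Sum>i\<in>S. f i i)"
    using e1 e2 e3 e4 by (simp only:)
  then show ?case using insert.hyps by simp
qed


definition dotp :: "'b set \<Rightarrow> ('b \<Rightarrow> bit) \<Rightarrow> ('b \<Rightarrow> bit) \<Rightarrow> bit" where
  "dotp T x y = (\<Sum>i\<in>T. x i * y i)"

lemma dotp_add_right: "dotp T x (\<lambda>i. y i + z i) = dotp T x y + dotp T x z"
  by (simp add: dotp_def distrib_left sum.distrib)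
lemma dotp_add_left: "dotp T (\<lambda>i. y i + z i) x = dotp T y x + dotp T z x"
  by (simp add: dotp_def distrib_right sum.distrib)
lemma dotp_delta: "i0 \<in> T \<Longrightarrow> finite T \<Longrightarrow> dotp T c (\<lambda>i. if i = i0 then 1 else 0) = c i0"
  by (simp add: dotp_def if_distrib cong: if_cong)

lemma perp_span:
  fixes col :: "'b \<Rightarrow> 'c \<Rightarrow> bit"
  assumes "finite J" "finite T"
  shows "\<forall>c. (\<forall>x\<in>vecs T. (\<forall>j\<in>J. dotp T (col j) x = 0) \<longrightarrow> dotp T c x = 0)
     \<longrightarrow> (\<exists>y. \<forall>i\<in>T. c i = (\<Sum>j\<in>J. y j * col j i))"
  using assms(1)
proof (induction J rule: finite_induct)
  case empty
  show ?case
  proof (intro allI impI)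
    fix c assume H: "\<forall>x\<in>vecs T. (\<forall>j\<in>{}. dotp T (col j) x = 0) \<longrightarrow> dotp T c x = 0"
    have "c i0 = 0" if "i0 \<in> T" for i0
    proof -
      have "(\<lambda>i. if i = i0 then 1 else 0) \<in> vecs T" using that by (auto simp: vecs_def)
      then have "dotp T c (\<lambda>i. if i = i0 then 1 else 0) = 0" using H by blast
      then show ?thesis using dotp_delta[OF that assms(2)] by simp
    qed
    then show "\<exists>y. \<forall>i\<in>T. c i = (\<Sum>j\<in>{}. y j * col j i)" by simp
  qed
next
  case (insert a J)
  show ?case
  proof (intro allI impI)
    fix c assume H: "\<forall>x\<in>vecs T. (\<forall>j\<in>insert a J. dotp T (col j) x = 0) \<longrightarrow> dotp T c x = 0"
    show "\<exists>y. \<forall>i\<in>T. c i = (\<Sum>j\<in>insert a J. y j * col j i)"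
    proof (cases "\<forall>x\<in>vecs T. (\<forall>j\<in>J. dotp T (col j) x = 0) \<longrightarrow> dotp T c x = 0")
      case True
      then obtain y where y: "\<forall>i\<in>T. c i = (\<Sum>j\<in>J. y j * col j i)" using insert.IH by blast
      define y' where "y' = (\<lambda>j. if j = a then 0 else y j)"
      have "\<forall>i\<in>T. c i = (\<Sum>j\<in>insert a J. y' j * col j i)"
      proof
        fix i assume "i \<in> T"
        have "(\<Sum>j\<in>insert a J. y' j * col j i) = (\<Sum>j\<in>J. y' j * col j i)"
          using insert.hyps by (simp add: y'_def)
        also have "\<dots> = (\<Sum>j\<in>J. y j * col j i)"
          using insert.hyps by (intro sum.cong) (auto simp: y'_def)
        finally show "c i = (\<Sum>j\<in>insert a J. y' j * col j i)" using y \<open>i \<in> T\<close> by simp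
      qed
      then show ?thesis by blast
    next
      case False
      then obtain x0 where x0: "x0 \<in> vecs T" "\<forall>j\<in>J. dotp T (col j) x0 = 0" "dotp T c x0 = 1"
        using bit_cases2 by blast
      have a1: "dotp T (col a) x0 = 1"
        using H x0 bit_cases2[of "dotp T (col a) x0"] by auto
      define c' where "c' = (\<lambda>i. c i + col a i)"
      have "\<forall>z\<in>vecs T. (\<forall>j\<in>J. dotp T (col j) z = 0) \<longrightarrow> dotp T c' z = 0"
      proof (intro ballI impI)
        fix z assume z: "z \<in> vecs T" "\<forall>j\<in>J. dotp T (col j) z = 0"
        have ec: "dotp T c' z = dotp T c z + dotp T (col a) z"
          unfolding c'_def by (rule dotp_add_left)
        show "dotp T c' z = 0"
        proof (cases "dotp T (col a) z = 0")
          case True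
          then have "dotp T c z = 0" using H z by auto
          then show ?thesis using ec True by simp
        next
          case False
          then have za: "dotp T (col a) z = 1" using bit_cases2 by blast
          define w where "w = (\<lambda>i. z i + x0 i)"
          have w: "w \<in> vecs T" using z x0 by (auto simp: vecs_def w_def)
          have "\<forall>j\<in>insert a J. dotp T (col j) w = 0"
            using z x0 za a1 by (auto simp: w_def dotp_add_right)
          then have "dotp T c w = 0" using H w by blast
          then have "dotp T c z = 1" using x0 by (simp add: w_def dotp_add_right bit_eq_add)
          then show ?thesis using ec za by simp
        qed
      qed
      then obtain y where y: "\<forall>i\<in>T. c' i = (\<Sum>j\<in>J. y j * col j i)" using insert.IH by blast
      define y' where "y' = (\<lambda>j. if j = a then 1 else y j)"
      have "\<forall>i\<in>T. c i = (\<Sum>j\<in>insert a J. y' j * col j i)"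
      proof
        fix i assume "i \<in> T"
        have "(\<Sum>j\<in>insert a J. y' j * col j i) = col a i + (\<Sum>j\<in>J. y' j * col j i)"
          using insert.hyps by (simp add: y'_def)
        also have "(\<Sum>j\<in>J. y' j * col j i) = (\<Sum>j\<in>J. y j * col j i)"
          using insert.hyps by (intro sum.cong) (auto simp: y'_def)
        finally have "(\<Sum>j\<in>insert a J. y' j * col j i) = col a i + c' i" using y \<open>i \<in> T\<close> by simp
        then show "c i = (\<Sum>j\<in>insert a J. y' j * col j i)"
          by (simp add: c'_def bit_eq_add)
      qed
      then show ?thesis by blast
    qed
  qed
qed


lemma subspace_iff: "module.subspace (\<lambda>(c::bit) (p::'a\<Rightarrow>bit) x. c * p x) S \<longleftrightarrow>
   (0 \<in> S \<and> (\<forall>x\<in>S. \<forall>y\<in>S. x + y \<in> S))"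
proof -
  interpret V: vector_space "\<lambda>(c::bit) (p::'a\<Rightarrow>bit) x. c * p x" by (rule vs)
  have sc0: "(\<lambda>x. 0 * p x) = (0::'a\<Rightarrow>bit)" for p by (rule ext) simp
  have sc1: "(\<lambda>x. 1 * p x) = p" for p :: "'a\<Rightarrow>bit" by (rule ext) simp
  have "(\<forall>c. \<forall>x\<in>S. (\<lambda>y. c * x y) \<in> S)" if "0 \<in> S" for S :: "('a \<Rightarrow> bit) set"
  proof (intro allI ballI)
    fix c x assume "x \<in> S"
    show "(\<lambda>y. c * x y) \<in> S"
    proof (cases "c = 0")
      case True then show ?thesis using sc0 that by simp
    next
      case False then have "c = 1" using bit_cases2 by blast
      then show ?thesis using sc1 \<open>x \<in> S\<close> by simp
    qed
  qed
  then show ?thesis unfolding V.subspace_def by blast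
qed

abbreviation sc :: "bit \<Rightarrow> ('a \<Rightarrow> bit) \<Rightarrow> 'a \<Rightarrow> bit" where
  "sc \<equiv> (\<lambda>c p x. c * p x)"

lemma dim_hyper:
  fixes W :: "('a \<Rightarrow> bit) set" and f :: "('a \<Rightarrow> bit) \<Rightarrow> bit"
  assumes sub: "module.subspace (\<lambda>(c::bit) (p::'a\<Rightarrow>bit) x. c * p x) W"
  and fin: "finite W"
  and add: "\<forall>x\<in>W. \<forall>y\<in>W. f (x + y) = f x + f y"
  shows "vector_space.dim (\<lambda>(c::bit) (p::'a\<Rightarrow>bit) x. c * p x) W =
         vector_space.dim (\<lambda>(c::bit) (p::'a\<Rightarrow>bit) x. c * p x) {x\<in>W. f x = 0}
         + (if \<exists>w\<in>W. f w = 1 then 1 else 0)"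
proof -
  note ms = vs[unfolded module_iff_vector_space[symmetric]]
  define H where "H = {x\<in>W. f x = 0}"
  have W0: "0 \<in> W" and Wadd: "\<forall>x\<in>W. \<forall>y\<in>W. x + y \<in> W" using sub unfolding subspace_iff by auto
  have "f (0 + 0) = f 0 + f 0" using add W0 by blast
  then have f0: "f 0 = 0" by simp
  have Hsub: "module.subspace sc H" unfolding subspace_iff
  proof (intro conjI ballI)
    show "0 \<in> H" using W0 f0 by (simp add: H_def)
    fix x y assume "x \<in> H" "y \<in> H"
    then have "x \<in> W" "y \<in> W" "f x = 0" "f y = 0" by (auto simp: H_def)
    then show "x + y \<in> H" using add Wadd by (simp add: H_def)
  qed
  show ?thesis
  proof (cases "\<exists>w\<in>W. f w = 1")
    case True
    then obtain w where w: "w \<in> W" "f w = 1" by blast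
    obtain B where B: "B \<subseteq> H" "module.independent sc B" "H \<subseteq> module.span sc B" "card B = vector_space.dim sc H"
      using vector_space.basis_exists[OF vs] by blast
    have spanH: "module.span sc H = H" using Hsub by (simp add: module.span_eq_iff[OF ms])
    have "module.span sc B \<subseteq> H" using module.span_mono[OF ms B(1)] spanH by blast
    moreover have "w \<notin> H" using w by (simp add: H_def)
    ultimately have wB: "w \<notin> module.span sc B" by blast
    have "H \<subseteq> W" unfolding H_def by (rule Collect_restrict)
    then have finB: "finite B" using B(1) fin by (meson finite_subset subset_trans)
    have "vector_space.dim sc W = card (insert w B)"
    proof (rule vector_space.dim_unique[OF vs])
      show "insert w B \<subseteq> W" using w B(1) by (auto simp: H_def)
      show "module.independent sc (insert w B)" using wB B(2) by (rule vector_space.independent_insertI[OF vs])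
      show "W \<subseteq> module.span sc (insert w B)"
      proof
        fix x assume x: "x \<in> W"
        have sub1: "module.span sc B \<subseteq> module.span sc (insert w B)" by (rule module.span_mono[OF ms]) auto
        show "x \<in> module.span sc (insert w B)"
        proof (cases "f x = 0")
          case True then show ?thesis using x B(3) sub1 by (auto simp: H_def)
        next
          case False
          then have fx: "f x = 1" using bit_cases2 by blast
          have "x + w \<in> H" using x w fx add Wadd by (simp add: H_def)
          then have "(x + w) + w \<in> module.span sc (insert w B)"
            using B(3) sub1 by (rule_tac module.span_add[OF ms]) (auto intro: module.span_base[OF ms])
          moreover have "(x + w) + w = x" by (rule ext) (simp add: add.assoc)
          ultimately show ?thesis by simp
        qed
      qed
    qed simp
    also have "\<dots> = vector_space.dim sc H + 1"
    proof -
      have "w \<notin> B" using wB module.span_base[OF ms] by blast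
      then show ?thesis using finB B(4) by simp
    qed
    finally show ?thesis using True by (simp add: H_def)
  next
    case False
    then have "H = W" using bit_cases2 by (auto simp: H_def)
    then show ?thesis using False by (simp add: H_def)
  qed
qed


lemma dotp_comm: "dotp T x y = dotp T y x"
  by (simp add: dotp_def mult.commute)

lemma adj_sym:
  assumes "simple_graph V E" "i \<in> V" "j \<in> V"
  shows "closed_adj E i j = closed_adj E j i"
  using assms by (auto simp: simple_graph_def closed_adj_def)

lemma adj_diag[simp]: "closed_adj E i i = 1"
  by (simp add: closed_adj_def)

lemma Nmul_out: "i \<notin> V \<Longrightarrow> Nmul V E p i = 0"
  by (simp add: Nmul_def)

lemma Nmul_add: "Nmul V E (x + y) = Nmul V E x + Nmul V E y"
  by (rule ext) (simp add: Nmul_def distrib_left sum.distrib)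

lemma vecs_add: "x \<in> vecs V \<Longrightarrow> y \<in> vecs V \<Longrightarrow> x + y \<in> vecs V"
  by (simp add: vecs_def)

lemma finite_vecs: "finite V \<Longrightarrow> finite (vecs V)"
proof -
  assume "finite V"
  then have "finite {f. \<forall>x. (x \<in> V \<longrightarrow> f x \<in> {0::bit,1}) \<and> (x \<notin> V \<longrightarrow> f x = 0)}"
    by (intro finite_set_of_finite_funs) auto
  moreover have "vecs V \<subseteq> {f. \<forall>x. (x \<in> V \<longrightarrow> f x \<in> {0::bit,1}) \<and> (x \<notin> V \<longrightarrow> f x = 0)}"
    using bit_cases2 by (auto simp: vecs_def)
  ultimately show ?thesis by (rule finite_subset[rotated])
qed

lemma null_sub: "module.subspace sc (null_patterns V E)"
proof -
  have "Nmul V E 0 = (\<lambda>_. 0)" by (rule ext) (simp add: Nmul_def)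
  moreover have "(\<lambda>_. 0::bit) + (\<lambda>_. 0) = (\<lambda>_. 0)" by (rule ext) simp
  ultimately show ?thesis unfolding subspace_iff null_patterns_def
    by (auto simp: vecs_def Nmul_add)
qed

lemma dot_sym:
  assumes "simple_graph V E"
  shows "dotp V x (Nmul V E p) = dotp V (Nmul V E x) p"
proof -
  have fin: "finite V" using assms by (simp add: simple_graph_def)
  have "dotp V x (Nmul V E p) = (\<Sum>i\<in>V. \<Sum>j\<in>V. x i * closed_adj E i j * p j)"
    unfolding dotp_def Nmul_def by (intro sum.cong) (auto simp: sum_distrib_left mult.assoc)
  also have "\<dots> = (\<Sum>j\<in>V. \<Sum>i\<in>V. x i * closed_adj E i j * p j)"
    by (rule sum.swap)
  also have "\<dots> = (\<Sum>j\<in>V. (\<Sum>i\<in>V. closed_adj E j i * x i) * p j)"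
  proof (rule sum.cong[OF refl])
    fix j assume j: "j \<in> V"
    have "(\<Sum>i\<in>V. x i * closed_adj E i j * p j) = (\<Sum>i\<in>V. closed_adj E j i * x i * p j)"
    proof (rule sum.cong[OF refl])
      fix i assume "i \<in> V"
      then have "closed_adj E i j = closed_adj E j i" using adj_sym[OF assms _ j] by blast
      then show "x i * closed_adj E i j * p j = closed_adj E j i * x i * p j" by (simp add: ac_simps)
    qed
    then show "(\<Sum>i\<in>V. x i * closed_adj E i j * p j) = (\<Sum>i\<in>V. closed_adj E j i * x i) * p j"
      by (simp add: sum_distrib_right)
  qed
  also have "\<dots> = dotp V (Nmul V E x) p"
    unfolding dotp_def Nmul_def by (intro sum.cong) auto
  finally show ?thesis .
qed

lemma dot_quad:
  assumes "simple_graph V E"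
  shows "dotp V x (Nmul V E x) = (\<Sum>i\<in>V. x i)"
proof -
  have fin: "finite V" using assms by (simp add: simple_graph_def)
  have "dotp V x (Nmul V E x) = (\<Sum>i\<in>V. \<Sum>j\<in>V. x i * closed_adj E i j * x j)"
    unfolding dotp_def Nmul_def by (intro sum.cong) (auto simp: sum_distrib_left mult.assoc)
  also have "\<dots> = (\<Sum>i\<in>V. x i * closed_adj E i i * x i)"
  proof (rule quad[OF fin], intro ballI)
    fix i j assume "i \<in> V" "j \<in> V"
    then show "x i * closed_adj E i j * x j = x j * closed_adj E j i * x i"
      using adj_sym[OF assms] by (simp add: mult.commute mult.left_commute)
  qed
  also have "\<dots> = (\<Sum>i\<in>V. x i)" by simp
  finally show ?thesis .
qed

lemma solve:
  assumes "simple_graph V E" "c \<in> vecs V"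
    and perp: "\<forall>x\<in>null_patterns V E. dotp V c x = 0"
  shows "\<exists>y\<in>vecs V. Nmul V E y = c"
proof -
  have fin: "finite V" using assms by (simp add: simple_graph_def)
  have "\<forall>x\<in>vecs V. (\<forall>j\<in>V. dotp V (\<lambda>i. closed_adj E i j) x = 0) \<longrightarrow> dotp V c x = 0"
  proof (intro ballI impI)
    fix x assume x: "x \<in> vecs V" and h: "\<forall>j\<in>V. dotp V (\<lambda>i. closed_adj E i j) x = 0"
    have "Nmul V E x j = 0" for j
    proof (cases "j \<in> V")
      case True
      have "Nmul V E x j = dotp V (\<lambda>i. closed_adj E i j) x"
        using True adj_sym[OF assms(1) True] by (auto simp: Nmul_def dotp_def intro!: sum.cong)
      then show ?thesis using h True by simp
    qed (simp add: Nmul_def)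
    then have "x \<in> null_patterns V E" using x by (auto simp: null_patterns_def)
    then show "dotp V c x = 0" using perp by blast
  qed
  then obtain y where y: "\<forall>i\<in>V. c i = (\<Sum>j\<in>V. y j * closed_adj E i j)"
    using perp_span[OF fin fin, of "\<lambda>j i. closed_adj E i j"] by blast
  define y' where "y' = (\<lambda>j. if j \<in> V then y j else 0)"
  have "y' \<in> vecs V" by (simp add: y'_def vecs_def)
  moreover have "Nmul V E y' = c"
  proof (rule ext)
    fix i show "Nmul V E y' i = c i"
    proof (cases "i \<in> V")
      case True
      then show ?thesis using y by (auto simp: Nmul_def y'_def mult.commute intro!: sum.cong)
    next
      case False then show ?thesis using assms(2) by (simp add: Nmul_def vecs_def)
    qed
  qed
  ultimately show ?thesis by blast
qed

lemma restr:
  assumes "finite V" "v \<in> V" "x \<in> vecs V" "x v = 0" "i \<in> V - {v}"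
  shows "Nmul (V - {v}) E x i = Nmul V E x i"
proof -
  have "Nmul V E x i = closed_adj E i v * x v + (\<Sum>j\<in>V - {v}. closed_adj E i j * x j)"
    using assms by (simp add: Nmul_def sum.remove)
  then show ?thesis using assms by (simp add: Nmul_def)
qed

lemma null_minus:
  assumes "finite V" "v \<in> V"
  shows "null_patterns (V - {v}) E = {x\<in>vecs V. x v = 0 \<and> (\<forall>i\<in>V - {v}. Nmul V E x i = 0)}"
proof -
  have vv: "x \<in> vecs (V - {v}) \<longleftrightarrow> x \<in> vecs V \<and> x v = 0" for x
    using assms by (auto simp: vecs_def)
  show ?thesis
  proof (intro set_eqI iffI)
    fix x assume "x \<in> null_patterns (V - {v}) E"
    then have x: "x \<in> vecs V" "x v = 0" "Nmul (V - {v}) E x = (\<lambda>_. 0)"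
      using vv by (auto simp: null_patterns_def)
    then show "x \<in> {x\<in>vecs V. x v = 0 \<and> (\<forall>i\<in>V - {v}. Nmul V E x i = 0)}"
    proof -
      have "\<forall>i\<in>V - {v}. Nmul V E x i = 0"
      proof
        fix i assume i: "i \<in> V - {v}"
        have "Nmul (V - {v}) E x i = 0" using x(3) by (simp add: fun_eq_iff)
        then show "Nmul V E x i = 0" using restr[OF assms x(1,2) i] by simp
      qed
      then show ?thesis using x by simp
    qed
  next
    fix x assume "x \<in> {x\<in>vecs V. x v = 0 \<and> (\<forall>i\<in>V - {v}. Nmul V E x i = 0)}"
    then have x: "x \<in> vecs V" "x v = 0" "\<forall>i\<in>V - {v}. Nmul V E x i = 0" by auto
    have "Nmul (V - {v}) E x = (\<lambda>_. 0)"
    proof (rule ext)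
      fix i show "Nmul (V - {v}) E x i = 0"
        using restr[OF assms x(1,2), of i] x(3) by (cases "i \<in> V - {v}") (auto simp: Nmul_def)
    qed
    then show "x \<in> null_patterns (V - {v}) E" using x vv by (simp add: null_patterns_def)
  qed
qed


theorem proposition2p6:
  fixes V :: "'a set" and E :: "'a \<Rightarrow> 'a \<Rightarrow> bool" and v :: 'a
  assumes "simple_graph V E" and "v \<in> V"
  shows "(always_activated V E v \<longleftrightarrow> null_diff V E v = 0) \<and>
         (never_activated V E v \<longleftrightarrow> null_diff V E v = 1)"
proof -
  note G = assms(1) and vV = assms(2)
  have fin: "finite V" using G by (simp add: simple_graph_def)
  define K where "K = null_patterns V E"
  define K' where "K' = null_patterns (V - {v}) E"
  define N where "N = Nmul V E"
  define d where "d = (\<lambda>i. if i = v then 1 else (0::bit))"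
  define P where "P = (\<exists>z\<in>K'. N z v = 1)"
  define hf where "hf = (\<exists>l\<in>K. l v = 1)"
  have half: "half_activated V E v = hf" by (simp add: half_activated_def hf_def K_def)
  have K'eq: "K' = {x\<in>vecs V. x v = 0 \<and> (\<forall>i\<in>V - {v}. N x i = 0)}"
    unfolding K'_def N_def by (rule null_minus[OF fin vV])
  have Keq: "K = {x\<in>vecs V. N x = (\<lambda>_. 0)}" by (simp add: K_def N_def null_patterns_def)
  have finK: "finite K" using finite_vecs[OF fin] by (simp add: Keq)
  have finK': "finite K'" using finite_vecs[OF fin] by (simp add: K'eq)
  have Hs: "{x\<in>K. x v = 0} = {x\<in>K'. N x v = 0}"
  proof (intro set_eqI iffI)
    fix x assume "x \<in> {x\<in>K. x v = 0}"
    then show "x \<in> {x\<in>K'. N x v = 0}" by (auto simp: Keq K'eq)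
  next
    fix x assume x: "x \<in> {x\<in>K'. N x v = 0}"
    have "N x = (\<lambda>_. 0)"
    proof (rule ext)
      fix i show "N x i = 0"
        using x by (cases "i \<in> V"; cases "i = v") (auto simp: K'eq N_def Nmul_out)
    qed
    then show "x \<in> {x\<in>K. x v = 0}" using x by (auto simp: Keq K'eq)
  qed
  have dimK: "nullity V E = vector_space.dim sc {x\<in>K. x v = 0} + (if hf then 1 else 0)"
    unfolding nullity_def hf_def K_def
    by (rule dim_hyper[OF null_sub finK[unfolded K_def]]) simp
  have dimK': "nullity (V - {v}) E = vector_space.dim sc {x\<in>K. x v = 0} + (if P then 1 else 0)"
    unfolding nullity_def P_def Hs K'_def
    by (rule dim_hyper[OF null_sub finK'[unfolded K'_def]]) (simp add: N_def Nmul_add)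
  have nd: "null_diff V E v = (if P then 1 else 0) - (if hf then 1 else 0)"
    unfolding null_diff_def dimK dimK' by simp
  have Nz: "N z = d" if "z \<in> K'" "N z v = 1" for z
  proof (rule ext)
    fix i show "N z i = d i"
      using that vV by (cases "i \<in> V"; cases "i = v") (auto simp: K'eq N_def Nmul_out d_def)
  qed
  have dotd: "dotp V x d = x v" for x
    using dotp_delta[OF vV fin, of x] by (simp add: d_def)
  have dotd': "dotp V d x = x v" for x
    using dotd dotp_comm by metis
  have ones_sum: "dotp V x (ones V) = (\<Sum>i\<in>V. x i)" for x
    by (simp add: dotp_def ones_def)
  have exist: "\<exists>p\<in>vecs V. N p = ones V"
  proof -
    have "ones V \<in> vecs V" by (simp add: ones_def vecs_def)
    moreover have "\<forall>x\<in>null_patterns V E. dotp V (ones V) x = 0"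
    proof
      fix x assume "x \<in> null_patterns V E"
      then have "Nmul V E x = (\<lambda>_. 0)" by (simp add: null_patterns_def)
      then have "dotp V x (Nmul V E x) = 0" by (simp add: dotp_def)
      then show "dotp V (ones V) x = 0" using dot_quad[OF G, of x] ones_sum dotp_comm by metis
    qed
    ultimately show ?thesis using solve[OF G] by (simp add: N_def)
  qed
  have c1: "\<not> P" if hf
  proof
    assume P
    then obtain z where z: "z \<in> K'" "N z v = 1" by (auto simp: P_def)
    obtain x where x: "x \<in> K" "x v = 1" using \<open>hf\<close> by (auto simp: hf_def)
    have "dotp V x (N z) = 1" using Nz[OF z] dotd x by simp
    moreover have "dotp V x (N z) = dotp V (N x) z" using dot_sym[OF G] by (simp add: N_def)
    moreover have "dotp V (N x) z = 0" using x by (simp add: Keq dotp_def)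
    ultimately show False by simp
  qed
  have c2: "\<forall>p\<in>vecs V. N p = ones V \<longrightarrow> p v = 0" if P
  proof (intro ballI impI)
    fix p assume p: "p \<in> vecs V" "N p = ones V"
    obtain z where z: "z \<in> K'" "N z v = 1" using \<open>P\<close> by (auto simp: P_def)
    have "dotp V z (N p) = dotp V (N z) p" using dot_sym[OF G] by (simp add: N_def)
    also have "\<dots> = p v" using Nz[OF z] dotd' by simp
    finally have e1: "dotp V z (N p) = p v" .
    have "dotp V z (N p) = dotp V z (N z)" using p(2) ones_sum dot_quad[OF G, of z] by (simp add: N_def)
    also have "\<dots> = z v" using Nz[OF z] dotd by simp
    also have "\<dots> = 0" using z by (simp add: K'eq)
    finally show "p v = 0" using e1 by simp
  qed
  have c3: "\<forall>p\<in>vecs V. N p = ones V \<longrightarrow> p v = 1" if "\<not> hf" "\<not> P"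
  proof -
    have "d \<in> vecs V" using vV by (simp add: d_def vecs_def)
    moreover have "\<forall>x\<in>null_patterns V E. dotp V d x = 0"
    proof
      fix x assume "x \<in> null_patterns V E"
      then have "x v \<noteq> 1" using that(1) by (auto simp: hf_def K_def)
      then show "dotp V d x = 0" using dotd' bit_cases2 by metis
    qed
    ultimately obtain y where y: "y \<in> vecs V" "N y = d" using solve[OF G] by (auto simp: N_def)
    have yv: "y v = 1"
    proof (rule ccontr)
      assume "y v \<noteq> 1"
      then have "y v = 0" using bit_cases2 by blast
      then have "y \<in> K'" using y by (simp add: K'eq d_def)
      moreover have "N y v = 1" using y by (simp add: d_def)
      ultimately show False using that(2) by (auto simp: P_def)
    qed
    show ?thesis
    proof (intro ballI impI)
      fix p assume p: "p \<in> vecs V" "N p = ones V"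
      have "p v = dotp V (N y) p" using y dotd' by simp
      also have "\<dots> = dotp V y (N p)" using dot_sym[OF G] by (simp add: N_def)
      also have "\<dots> = dotp V y (N y)" using p(2) ones_sum dot_quad[OF G, of y] by (simp add: N_def)
      also have "\<dots> = y v" using y dotd by simp
      finally show "p v = 1" using yv by simp
    qed
  qed
  have AA: "always_activated V E v \<longleftrightarrow> \<not> hf \<and> (\<forall>p\<in>vecs V. N p = ones V \<longrightarrow> p v = 1)"
    by (simp add: always_activated_def half N_def)
  have NA: "never_activated V E v \<longleftrightarrow> \<not> hf \<and> (\<forall>p\<in>vecs V. N p = ones V \<longrightarrow> p v = 0)"
    by (simp add: never_activated_def half N_def)
  obtain p0 where p0: "p0 \<in> vecs V" "N p0 = ones V" using exist by blast
  show ?thesis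
  proof (cases hf)
    case True
    then show ?thesis using c1 nd AA NA by simp
  next
    case False
    show ?thesis
    proof (cases P)
      case True
      have "p0 v = 0" using c2[OF True] p0 by blast
      then show ?thesis using c2[OF True] False True nd AA NA p0 by auto
    next
      case nP: False
      have "p0 v = 1" using c3[OF False nP] p0 by blast
      then show ?thesis using c3[OF False nP] False nP nd AA NA p0 by auto
    qed
  qed
qed

end
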